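(* Let $G$ be a graph with maximum degree $d\ge1$ and let $E$ be a finite subset of the edges of $G$. Then there is an ordering $e_1,e_2,\dots,e_{|E|}$ of the elements of $E$ such that the number of disconnected edges in this ordering is at least $\lfloor |E|/(2d)\rfloor$, where an edge $e_j$ is called disconnected if it shares no vertex with any of the edges $e_1,\dots,e_{j-1}$. *)

theory Defs
  imports Main
begin

definition simple_graph :: "('a \<Rightarrow> 'a \<Rightarrow> bool) \<Rightarrow> bool" where
  "simple_graph Adj \<longleftrightarrow> (\<forall>u v. Adj u v \<longrightarrow> Adj v u) \<and> (\<forall>v. \<not> Adj v v)"

definition graph_edges :: "('a \<Rightarrow> 'a \<Rightarrow> bool) \<Rightarrow> 'a set set" where
  "graph_edges Adj = {{u, v} | u v. Adj u v}"

definition vdegree :: "('a \<Rightarrow> 'a \<Rightarrow> bool) \<Rightarrow> 'a \<Rightarrow> nat" where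
  "vdegree Adj v = card {u. Adj v u}"

definition max_degree :: "('a \<Rightarrow> 'a \<Rightarrow> bool) \<Rightarrow> nat \<Rightarrow> bool" where
  "max_degree Adj d \<longleftrightarrow>
     (\<forall>v. finite {u. Adj v u} \<and> vdegree Adj v \<le> d) \<and> (\<exists>v. vdegree Adj v = d)"

text \<open>In an ordering es = [e_1, ..., e_n] (0-indexed), position j is disconnected if
e_j shares no vertex with any earlier edge.\<close>
definition disconnected_at :: "'a set list \<Rightarrow> nat \<Rightarrow> bool" where
  "disconnected_at es j \<longleftrightarrow> (\<forall>i<j. es ! j \<inter> es ! i = {})"

definition num_disconnected :: "'a set list \<Rightarrow> nat" where
  "num_disconnected es = card {j. j < length es \<and> disconnected_at es j}"

end

theory Submission
  imports Defs
begin

lemma nbr_bound: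
  assumes "simple_graph Adj" "max_degree Adj d" "E \<subseteq> graph_edges Adj" "e \<in> E"
  shows "card {f\<in>E. f \<inter> e \<noteq> {}} \<le> 2 * d"
proof -
  obtain u v where e: "e = {u,v}" "Adj u v" using assms(3,4) unfolding graph_edges_def by blast
  have fu: "finite {w. Adj u w}" "card {w. Adj u w} \<le> d"
    using assms(2) unfolding max_degree_def vdegree_def by auto
  have fv: "finite {w. Adj v w}" "card {w. Adj v w} \<le> d"
    using assms(2) unfolding max_degree_def vdegree_def by auto
  have sym: "\<And>a b. Adj a b \<Longrightarrow> Adj b a" using assms(1) unfolding simple_graph_def by blast
  have sub: "{f\<in>E. f \<inter> e \<noteq> {}} \<subseteq> (\<lambda>w. {u,w}) ` {w. Adj u w} \<union> (\<lambda>w. {v,w}) ` {w. Adj v w}"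
  proof
    fix f assume "f \<in> {f\<in>E. f \<inter> e \<noteq> {}}"
    then have fE: "f \<in> E" and ne: "f \<inter> e \<noteq> {}" by auto
    obtain a b where f: "f = {a,b}" "Adj a b" using fE assms(3) unfolding graph_edges_def by blast
    have "a = u \<or> a = v \<or> b = u \<or> b = v" using ne f e by auto
    then show "f \<in> (\<lambda>w. {u,w}) ` {w. Adj u w} \<union> (\<lambda>w. {v,w}) ` {w. Adj v w}"
    proof (elim disjE)
      assume "a = u" thus ?thesis using f by auto
    next
      assume "a = v" thus ?thesis using f by auto
    next
      assume "b = u" thus ?thesis using f sym[OF f(2)] by (auto simp: insert_commute)
    next
      assume "b = v" thus ?thesis using f sym[OF f(2)] by (auto simp: insert_commute)
    qed
  qed
  have "card {f\<in>E. f \<inter> e \<noteq> {}} \<le> card ((\<lambda>w. {u,w}) ` {w. Adj u w} \<union> (\<lambda>w. {v,w}) ` {w. Adj v w})"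
    by (rule card_mono) (use fu fv sub in auto)
  also have "\<dots> \<le> card ((\<lambda>w. {u,w}) ` {w. Adj u w}) + card ((\<lambda>w. {v,w}) ` {w. Adj v w})"
    by (rule card_Un_le)
  also have "\<dots> \<le> card {w. Adj u w} + card {w. Adj v w}"
    by (intro add_mono card_image_le fu fv)
  also have "\<dots> \<le> 2 * d" using fu fv by simp
  finally show ?thesis .
qed

lemma matching_exists:
  assumes "simple_graph Adj" "max_degree Adj d" "E \<subseteq> graph_edges Adj" "finite E"
  shows "\<exists>M. M \<subseteq> E \<and> (\<forall>a\<in>M. \<forall>b\<in>M. a \<noteq> b \<longrightarrow> a \<inter> b = {}) \<and> card E \<le> 2 * d * card M"
  using assms(4,3)
proof (induction "card E" arbitrary: E rule: less_induct)
  case less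
  show ?case
  proof (cases "E = {}")
    case True thus ?thesis by auto
  next
    case False
    then obtain e where eE: "e \<in> E" by auto
    define N where "N = {f\<in>E. f \<inter> e \<noteq> {}}"
    have cN: "card N \<le> 2 * d" unfolding N_def by (rule nbr_bound[OF assms(1,2) less.prems(2) eE])
    have eN: "e \<in> N" unfolding N_def using eE less.prems(2) unfolding graph_edges_def by auto
    define E' where "E' = E - N"
    have fE': "finite E'" using less.prems(1) unfolding E'_def by auto
    have lt: "card E' < card E" unfolding E'_def
      using eN eE less.prems(1) N_def by (intro psubset_card_mono) auto
    obtain M' where M': "M' \<subseteq> E'" "\<forall>a\<in>M'. \<forall>b\<in>M'. a \<noteq> b \<longrightarrow> a \<inter> b = {}"
      "card E' \<le> 2 * d * card M'"
      using less.hyps[OF lt fE'] less.prems(2) unfolding E'_def by blast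
    have eM': "e \<notin> M'" using M'(1) eN unfolding E'_def by auto
    have disj: "\<forall>b\<in>M'. e \<inter> b = {} \<and> b \<inter> e = {}" using M'(1) unfolding E'_def N_def by auto
    have fM': "finite M'" using M'(1) fE' finite_subset by auto
    have NE: "N \<subseteq> E" "finite N" unfolding N_def using less.prems(1) by auto
    have "card E = card N + card E'" unfolding E'_def using NE card_Diff_subset[OF NE(2) NE(1)]
      card_mono[OF less.prems(1) NE(1)] by simp
    also have "\<dots> \<le> 2 * d * card (insert e M')" using cN M'(3) eM' fM' by simp
    finally show ?thesis using M' eE disj unfolding E'_def
      by (intro exI[of _ "insert e M'"]) auto
  qed
qed

theorem lemma6p11:
  fixes Adj :: "'a \<Rightarrow> 'a \<Rightarrow> bool" and d :: nat and E :: "'a set set"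
  assumes "simple_graph Adj"
    and "max_degree Adj d"
    and "d \<ge> 1"
    and "E \<subseteq> graph_edges Adj"
    and "finite E"
  shows "\<exists>es. distinct es \<and> set es = E \<and> num_disconnected es \<ge> card E div (2 * d)"
proof -
  obtain M where M: "M \<subseteq> E" "\<forall>a\<in>M. \<forall>b\<in>M. a \<noteq> b \<longrightarrow> a \<inter> b = {}" "card E \<le> 2 * d * card M"
    using matching_exists[OF assms(1,2,4,5)] by blast
  have fM: "finite M" using M(1) assms(5) finite_subset by auto
  obtain ms where ms: "distinct ms" "set ms = M" using finite_distinct_list[OF fM] by blast
  obtain rs where rs: "distinct rs" "set rs = E - M" using finite_distinct_list[of "E - M"] assms(5) by blast
  define es where "es = ms @ rs"
  have d1: "distinct es" "set es = E" unfolding es_def using ms rs M(1) by auto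
  have "{j. j < length ms} \<subseteq> {j. j < length es \<and> disconnected_at es j}"
  proof
    fix j assume "j \<in> {j. j < length ms}"
    then have j: "j < length ms" by simp
    have "\<forall>i<j. es ! j \<inter> es ! i = {}"
    proof (intro allI impI)
      fix i assume "i < j"
      then have "es ! i = ms ! i" "es ! j = ms ! j" "ms ! i \<noteq> ms ! j" "ms ! i \<in> M" "ms ! j \<in> M"
        using j ms unfolding es_def by (auto simp: nth_append nth_eq_iff_index_eq)
      then show "es ! j \<inter> es ! i = {}" using M(2) by metis
    qed
    then show "j \<in> {j. j < length es \<and> disconnected_at es j}"
      using j unfolding es_def disconnected_at_def by simp
  qed
  then have "card M \<le> num_disconnected es"
  proof -
    have "card M = card {j. j < length ms}" using distinct_card[OF ms(1)] ms(2) by simp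
    also have "\<dots> \<le> card {j. j < length es \<and> disconnected_at es j}"
      by (rule card_mono) (use \<open>{j. j < length ms} \<subseteq> _\<close> in auto)
    finally show ?thesis unfolding num_disconnected_def .
  qed
  moreover have "card E div (2 * d) \<le> card M"
  proof -
    have "card E div (2 * d) \<le> (2 * d * card M) div (2 * d)" by (rule div_le_mono[OF M(3)])
    also have "\<dots> = card M" using assms(3) by simp
    finally show ?thesis .
  qed
  ultimately show ?thesis using d1 by (intro exI[of _ es]) auto
qed

end
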